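(* Let $f = \sum_{i=0}^{n} c_i x^{k_i} \in \mathbb{N}_0[x^{\pm 1}]$, with $c_0,\ldots,c_n$ positive integers and $k_0 > \cdots > k_n$ integers, and suppose $|\operatorname{supp}(f)| > 1$. Then $f$ is irreducible in $\mathbb{N}_0[x^{\pm 1}]$ if and only if $f$ is monolithic and $\gcd(c_0,\ldots,c_n) = 1$.
   Context: $\mathbb{N}_0[x^{\pm 1}]$ denotes the semiring of Laurent polynomials in $x$ with nonnegative integer coefficients; $\operatorname{supp}(f)$ is the set of exponents occurring in $f$ with nonzero coefficient. The units of $\mathbb{N}_0[x^{\pm 1}]$ are exactly $x^k$, $k\in\mathbb{Z}$. An element $f$ is irreducible if it is nonzero, not a unit, and whenever $f = gh$ one of $g,h$ is a unit. A nonzero $f \in \mathbb{N}_0[x^{\pm 1}]$ is monolithic if whenever $f = gh$ with $g,h \in \mathbb{N}_0[x^{\pm 1}]$, one of $g, h$ is a monomial, i.e. of the form $c x^k$ with $c$ a positive integer and $k \in \mathbb{Z}$. *)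

theory Defs
  imports "HOL-Library.Poly_Mapping" "HOL-Computational_Algebra.Factorial_Ring"
begin

text \<open>The semiring N_0[x^{+-1}] is modelled as finitely supported functions
  int =>0 nat, with the convolution product of Poly_Mapping:
  Poly_Mapping.single k c represents c x^k, and keys f is supp(f).\<close>

type_synonym laurent_nat = "int \<Rightarrow>\<^sub>0 nat"

definition is_monomial :: "laurent_nat \<Rightarrow> bool" where
  "is_monomial g \<longleftrightarrow> (\<exists>c k. c > 0 \<and> g = Poly_Mapping.single k c)"

definition monolithic :: "laurent_nat \<Rightarrow> bool" where
  "monolithic f \<longleftrightarrow> f \<noteq> 0 \<and>
     (\<forall>g h. f = g * h \<longrightarrow> is_monomial g \<or> is_monomial h)"

end

theory Submission
  imports Defs
begin

lemma decomp_single: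
  fixes g :: laurent_nat
  shows "g = Poly_Mapping.single a (Poly_Mapping.lookup g a) + (g - Poly_Mapping.single a (Poly_Mapping.lookup g a))"
  by (rule poly_mapping_eqI) (simp add: lookup_add lookup_minus lookup_single when_def)

lemma lookup_mult_ge:
  fixes g h :: laurent_nat
  shows "Poly_Mapping.lookup g a * Poly_Mapping.lookup h b \<le> Poly_Mapping.lookup (g * h) (a + b)"
proof -
  define sa where "sa = Poly_Mapping.single a (Poly_Mapping.lookup g a)"
  define sb where "sb = Poly_Mapping.single b (Poly_Mapping.lookup h b)"
  define g' where "g' = g - sa"
  define h' where "h' = h - sb"
  have g: "g = sa + g'" unfolding sa_def g'_def by (rule decomp_single)
  have h: "h = sb + h'" unfolding sb_def h'_def by (rule decomp_single)
  have "g * h = sa * sb + (sa * h' + g' * h)"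
  proof -
    have "g * h = (sa + g') * (sb + h')" using g h by simp
    also have "\<dots> = sa * sb + (sa * h' + g' * (sb + h'))" by (simp add: algebra_simps)
    finally show ?thesis using h by simp
  qed
  hence "Poly_Mapping.lookup (g * h) (a + b) = Poly_Mapping.lookup (sa * sb) (a + b) + Poly_Mapping.lookup (sa * h' + g' * h) (a + b)"
    by (simp add: lookup_add)
  moreover have "Poly_Mapping.lookup (sa * sb) (a + b) = Poly_Mapping.lookup g a * Poly_Mapping.lookup h b"
    unfolding sa_def sb_def by (simp add: mult_single)
  ultimately show ?thesis by simp
qed

lemma unit_single:
  fixes g h :: laurent_nat
  assumes "g * h = 1"
  shows "\<exists>a. g = Poly_Mapping.single a 1"
proof -
  have g0: "g \<noteq> 0" and h0: "h \<noteq> 0" using assms by auto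
  then obtain b where b: "b \<in> Poly_Mapping.keys h" by (metis Poly_Mapping.keys_eq_empty ex_in_conv)
  have ks: "x = - b" if "x \<in> Poly_Mapping.keys g" for x
  proof -
    have "0 < Poly_Mapping.lookup g x * Poly_Mapping.lookup h b" using that b by (simp add: in_keys_iff)
    also have "\<dots> \<le> Poly_Mapping.lookup 1 (x + b)" using lookup_mult_ge[of g x h b] assms by simp
    finally show ?thesis by (auto simp: lookup_one when_def split: if_splits)
  qed
  have "Poly_Mapping.keys g \<noteq> {}" using g0 by simp
  hence mb: "-b \<in> Poly_Mapping.keys g" using ks by blast
  have "Poly_Mapping.lookup g (-b) * Poly_Mapping.lookup h b \<le> Poly_Mapping.lookup 1 0" using lookup_mult_ge[of g "-b" h b] assms by simp
  hence "Poly_Mapping.lookup g (-b) * Poly_Mapping.lookup h b \<le> 1" by (simp add: lookup_one)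
  moreover have "Poly_Mapping.lookup g (-b) > 0" "Poly_Mapping.lookup h b > 0" using mb b by (auto simp: in_keys_iff)
  ultimately have l1: "Poly_Mapping.lookup g (-b) = 1"
    by (metis One_nat_def less_one mult_eq_1_iff nat_less_le not_less mult_le_cancel1 mult_1_right)
  have "g = Poly_Mapping.single (-b) 1"
  proof (rule poly_mapping_eqI)
    fix x show "Poly_Mapping.lookup g x = Poly_Mapping.lookup (Poly_Mapping.single (-b) 1) x"
      using ks[of x] l1 by (cases "x = -b") (auto simp: lookup_single in_keys_iff)
  qed
  thus ?thesis by blast
qed

lemma dvd_one_iff:
  fixes g :: laurent_nat
  shows "g dvd 1 \<longleftrightarrow> (\<exists>a. g = Poly_Mapping.single a 1)"
proof
  assume "g dvd 1"
  then obtain h where "1 = g * h" by (auto simp: dvd_def)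
  thus "\<exists>a. g = Poly_Mapping.single a 1" using unit_single by metis
next
  assume "\<exists>a. g = Poly_Mapping.single a 1"
  then obtain a where "g = Poly_Mapping.single a 1" by blast
  hence "g * Poly_Mapping.single (-a) 1 = Poly_Mapping.single 0 1" by (simp add: mult_single)
  hence "g * Poly_Mapping.single (-a) 1 = 1" by (metis single_one)
  thus "g dvd 1" by (metis dvd_triv_left)
qed

lemma card_keys_single: "card (Poly_Mapping.keys (Poly_Mapping.single a (d::nat))) \<le> 1"
  by (cases "d = 0") simp_all

lemma lookup_scale: "Poly_Mapping.lookup (Poly_Mapping.single 0 s * (p :: laurent_nat)) x = s * Poly_Mapping.lookup p x"
  by (simp flip: mult_map_scale_conv_mult add: Poly_Mapping.map.rep_eq when_def)

theorem lemma2p4: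
  fixes n :: nat and c :: "nat \<Rightarrow> nat" and k :: "nat \<Rightarrow> int" and f :: laurent_nat
  assumes "\<forall>i\<le>n. c i > 0"
    and "\<forall>i j. i < j \<and> j \<le> n \<longrightarrow> k j < k i"
    and "f = (\<Sum>i\<le>n. Poly_Mapping.single (k i) (c i))"
    and "card (Poly_Mapping.keys f) > 1"
  shows "irreducible f \<longleftrightarrow> monolithic f \<and> Gcd (c ` {..n}) = 1"
proof -
  have notsingle: "f \<noteq> Poly_Mapping.single a d" for a d
    using assms(4) card_keys_single[of a d] by auto
  have fnz: "f \<noteq> 0" using notsingle[of 0 0] by simp
  have fnu: "\<not> f dvd 1" using notsingle by (auto simp: dvd_one_iff)
  have kinj: "k j \<noteq> k i" if "i \<le> n" "j \<le> n" "j \<noteq> i" for i j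
    using assms(2) that by (metis linorder_neqE_nat less_irrefl)
  have lf: "Poly_Mapping.lookup f (k i) = c i" if "i \<le> n" for i
  proof -
    have "Poly_Mapping.lookup f (k i) = (\<Sum>j\<le>n. if j = i then c i else 0)"
      unfolding assms(3) lookup_sum
      by (rule sum.cong) (use kinj that in \<open>auto simp: lookup_single when_def\<close>)
    also have "\<dots> = c i" using that by simp
    finally show ?thesis .
  qed
  show ?thesis
  proof
    assume irr: "irreducible f"
    have mono: "monolithic f"
      unfolding monolithic_def
    proof (intro conjI allI impI)
      show "f \<noteq> 0" by (rule fnz)
      fix g h assume "f = g * h"
      hence "g dvd 1 \<or> h dvd 1" using irr by (auto simp: irreducible_def)
      thus "is_monomial g \<or> is_monomial h"
        unfolding dvd_one_iff is_monomial_def by auto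
    qed
    define d where "d = Gcd (c ` {..n})"
    have dd: "d dvd c i" if "i \<le> n" for i unfolding d_def using that by (simp add: Gcd_dvd)
    define f' where "f' = (\<Sum>i\<le>n. Poly_Mapping.single (k i) (c i div d))"
    have "Poly_Mapping.single 0 d * f' = (\<Sum>i\<le>n. Poly_Mapping.single 0 d * Poly_Mapping.single (k i) (c i div d))"
      unfolding f'_def by (simp add: sum_distrib_left)
    also have "\<dots> = f" unfolding assms(3)
      by (rule sum.cong) (use dd in \<open>auto simp: mult_single\<close>)
    finally have fd: "f = Poly_Mapping.single 0 d * f'" by simp
    have I: "\<And>a b. f = a * b \<Longrightarrow> a dvd 1 \<or> b dvd 1" using irr unfolding irreducible_def by blast
    have "(Poly_Mapping.single 0 d :: laurent_nat) dvd 1 \<or> f' dvd 1" using I[OF fd] by simp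
    hence "d = 1"
    proof
      assume "(Poly_Mapping.single 0 d :: laurent_nat) dvd 1"
      then obtain a where a: "(Poly_Mapping.single 0 d :: laurent_nat) = Poly_Mapping.single a 1"
        by (auto simp: dvd_one_iff)
      hence "Poly_Mapping.lookup (Poly_Mapping.single 0 d :: laurent_nat) a = 1" by simp
      thus "d = 1" by (auto simp: lookup_single when_def split: if_splits)
    next
      assume "f' dvd 1"
      then obtain a where "f' = Poly_Mapping.single a 1" by (auto simp: dvd_one_iff)
      hence "f = Poly_Mapping.single a d" using fd by (simp add: mult_single)
      thus "d = 1" using notsingle by blast
    qed
    thus "monolithic f \<and> Gcd (c ` {..n}) = 1" using mono d_def by simp
  next
    assume H: "monolithic f \<and> Gcd (c ` {..n}) = 1"
    show "irreducible f"
      unfolding irreducible_def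
    proof (intro conjI allI impI fnz fnu)
      have key: "g dvd 1" if fe: "f = g * h" and mg: "is_monomial g" for g h
      proof -
        obtain c0 a where c0: "c0 > 0" "g = Poly_Mapping.single a c0"
          using mg by (auto simp: is_monomial_def)
        have gs: "g = Poly_Mapping.single 0 c0 * Poly_Mapping.single a 1"
          using c0 by (simp add: mult_single)
        have "c0 dvd c i" if "i \<le> n" for i
        proof -
          have "c i = Poly_Mapping.lookup f (k i)" using lf that by simp
          also have "\<dots> = c0 * Poly_Mapping.lookup (Poly_Mapping.single a 1 * h) (k i)"
            unfolding fe gs mult.assoc lookup_scale ..
          finally show ?thesis by simp
        qed
        hence "c0 dvd Gcd (c ` {..n})" by (auto intro: Gcd_greatest)
        hence "c0 = 1" using H by simp
        thus ?thesis using c0 by (auto simp: dvd_one_iff)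
      qed
      fix g h assume fe: "f = g * h"
      hence "is_monomial g \<or> is_monomial h" using H by (auto simp: monolithic_def)
      thus "g dvd 1 \<or> h dvd 1"
        using key[OF fe] key[of h g] fe by (auto simp: mult.commute)
    qed
  qed
qed

end
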